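(* Let $\alpha>0$ and let $a:\mathbb{R}\to[\alpha,\infty)$ and $f:\mathbb{R}\to\mathbb{R}$ be slowly oscillating. Then the function $F(t):=\int_{-\infty}^te^{-\int_s^ta(r)\,dr}f(s)\,ds$, $t\in\mathbb{R}$, is slowly oscillating.
   Context: In this statement a function $g:\mathbb{R}\to\mathbb{R}$ is called slowly oscillating if it is bounded and continuous (hence uniformly continuous) and for every $\omega\in\mathbb{R}$, $\lim_{|t|\to+\infty}|g(t+\omega)-g(t)|=0$. *)

theory Defs
  imports "HOL-Analysis.Analysis"
begin

definition slowly_oscillating :: "(real \<Rightarrow> real) \<Rightarrow> bool" where
  "slowly_oscillating g \<longleftrightarrow>
     bounded (range g) \<and> continuous_on UNIV g \<and>
     (\<forall>\<omega>::real. ((\<lambda>t. \<bar>g (t + \<omega>) - g t\<bar>) \<longlongrightarrow> 0) at_infinity)"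

end

theory Submission
  imports Defs
begin

lemma exp_Iic_has_integral:
  fixes \<alpha> c :: real assumes "\<alpha> > 0"
  shows "(\<lambda>s. exp (\<alpha> * s)) absolutely_integrable_on {..c} \<and>
         integral {..c} (\<lambda>s. exp (\<alpha> * s)) = exp (\<alpha> * c) / \<alpha>"
proof -
  let ?g = "\<lambda>x::real. exp (- \<alpha> * x)"
  have h: "(?g has_integral exp (-\<alpha> * (-c)) / \<alpha>) {-c..}"
    using has_integral_exp_minus_to_infinity[OF assms] .
  have ai: "?g absolutely_integrable_on {-c..}"
    by (rule nonnegative_absolutely_integrable_1) (use h in auto)
  have "(\<lambda>x. ?g (-x)) absolutely_integrable_on {..c} \<and> integral {..c} (\<lambda>x. ?g (-x)) = exp (-\<alpha> * (-c)) / \<alpha>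
     \<longleftrightarrow> ?g absolutely_integrable_on {-c..} \<and> integral {-c..} ?g = exp (-\<alpha> * (-c)) / \<alpha>"
    by (rule has_absolute_integral_reflect_real) auto
  with ai h show ?thesis by (simp add: integral_unique)
qed

lemma cont_Iic:
  fixes g :: "real \<Rightarrow> real"
  assumes "\<And>c. c < t \<Longrightarrow> continuous_on {c..t} g"
  shows "continuous_on {..t} g"
  unfolding continuous_on_eq_continuous_within
proof
  fix x assume x: "x \<in> {..t}"
  have "continuous (at x within {x-1..t}) g"
    using assms[of "x-1"] x by (simp add: continuous_on_eq_continuous_within)
  moreover have "at x within {..t} = at x within {x-1..t}"
    by (rule at_within_nhd[where S="{x-1<..}"]) auto
  ultimately show "continuous (at x within {..t}) g" by simp
qed

lemma exp_diff_le:
  fixes x y :: real assumes "x \<ge> 0" "y \<ge> 0"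
  shows "\<bar>exp (-x) - exp (-y)\<bar> \<le> \<bar>x - y\<bar>"
proof -
  have *: "exp (-u) - exp (-v) \<le> v - u" if "0 \<le> u" "u \<le> v" for u v :: real
  proof -
    have "exp (-u) - exp (-v) = exp (-u) * (1 - exp (u - v))"
      by (simp add: algebra_simps flip: exp_add)
    also have "\<dots> \<le> (1 - exp (u - v))"
      using that by (intro mult_left_le_one_le) auto
    also have "\<dots> \<le> v - u" using exp_ge_add_one_self[of "u - v"] by argo
    finally show ?thesis .
  qed
  show ?thesis
  proof (cases "x \<le> y")
    case True with *[of x y] assms show ?thesis by auto
  next
    case False with *[of y x] assms show ?thesis by auto
  qed
qed

locale so_setting =
  fixes \<alpha> M :: real and a f :: "real \<Rightarrow> real"
  assumes alpha: "\<alpha> > 0" and a_ge: "\<And>t. a t \<ge> \<alpha>" and a_cont: "continuous_on UNIV a"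
    and f_cont: "continuous_on UNIV f" and f_bd: "\<And>t. \<bar>f t\<bar> \<le> M"
begin

definition A where "A s t = integral {s..t} a"
definition G where "G t s = exp (- A s t) * f s"
definition F where "F t = integral {..t} (G t)"

lemma M_nonneg: "M \<ge> 0" using f_bd[of 0] by linarith

lemma a_int: "a integrable_on {s..t}"
  by (rule integrable_continuous_real) (rule continuous_on_subset[OF a_cont], auto)

lemma A_ge: "s \<le> t \<Longrightarrow> A s t \<ge> \<alpha> * (t - s)"
proof -
  assume st: "s \<le> t"
  have "integral {s..t} (\<lambda>_. \<alpha>) \<le> integral {s..t} a"
    by (rule integral_le) (auto simp: a_int a_ge)
  then show ?thesis using st by (simp add: A_def mult.commute)
qed

lemma A_nonneg: "s \<le> t \<Longrightarrow> A s t \<ge> 0"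
  using A_ge[of s t] alpha by (smt (verit) mult_nonneg_nonneg)

lemma A_cont: "continuous_on {..t} (\<lambda>s. A s t)"
  unfolding A_def by (rule cont_Iic) (rule indefinite_integral_continuous_1'[OF a_int])

lemma G_cont: "continuous_on {..t} (G t)"
  unfolding G_def
  by (intro continuous_intros A_cont continuous_on_subset[OF f_cont]) auto

lemma G_bd: "s \<le> t \<Longrightarrow> \<bar>G t s\<bar> \<le> M * exp (-\<alpha> * t) * exp (\<alpha> * s)"
proof -
  assume st: "s \<le> t"
  have "\<bar>G t s\<bar> = exp (- A s t) * \<bar>f s\<bar>" by (simp add: G_def abs_mult)
  also have "\<dots> \<le> exp (- (\<alpha> * (t - s))) * M"
    using A_ge[OF st] f_bd[of s] by (intro mult_mono) auto
  also have "\<dots> = M * exp (-\<alpha> * t) * exp (\<alpha> * s)"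
    by (simp add: algebra_simps flip: exp_add)
  finally show ?thesis .
qed

lemma B_has: "((\<lambda>s. K * exp (\<alpha> * s)) has_integral K * (exp (\<alpha> * c) / \<alpha>)) {..c}"
proof -
  have "(\<lambda>s. exp (\<alpha> * s)) integrable_on {..c}"
    using exp_Iic_has_integral[OF alpha, of c] absolutely_integrable_on_def by blast
  then have "((\<lambda>s. exp (\<alpha> * s)) has_integral (exp (\<alpha> * c) / \<alpha>)) {..c}"
    using exp_Iic_has_integral[OF alpha, of c] integrable_integral by fastforce
  then show ?thesis by (rule has_integral_mult_right)
qed

lemma G_int: "c \<le> t \<Longrightarrow> G t integrable_on {..c}"
proof -
  assume ct: "c \<le> t"
  show ?thesis
  proof (rule measurable_bounded_by_integrable_imp_integrable)
    show "G t \<in> borel_measurable (lebesgue_on {..c})"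
      by (rule continuous_imp_measurable_on_sets_lebesgue)
         (rule continuous_on_subset[OF G_cont], use ct in auto)
    show "(\<lambda>s. M * exp (-\<alpha> * t) * exp (\<alpha> * s)) integrable_on {..c}"
      using B_has by blast
    show "norm (G t x) \<le> M * exp (-\<alpha> * t) * exp (\<alpha> * x)" if "x \<in> {..c}" for x
      using G_bd[of x t] that ct by simp
  qed auto
qed

lemma G_int2: "c \<le> t \<Longrightarrow> G t integrable_on {c..t}"
  by (rule integrable_continuous_real) (rule continuous_on_subset[OF G_cont], auto)

lemma F_split: "c \<le> t \<Longrightarrow> F t = integral {..c} (G t) + integral {c..t} (G t)"
proof -
  assume ct: "c \<le> t"
  have "(G t has_integral (integral {..c} (G t) + integral {c..t} (G t))) ({..c} \<union> {c..t})"
    by (rule has_integral_Un) (use G_int[OF ct] G_int2[OF ct] ct in \<open>auto simp: min_def\<close>)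
  moreover have "{..c} \<union> {c..t} = {..t}" using ct by auto
  ultimately show ?thesis unfolding F_def by (simp add: integral_unique)
qed

lemma tail_bd: "c \<le> t \<Longrightarrow> \<bar>integral {..c} (G t)\<bar> \<le> M * exp (-\<alpha> * (t - c)) / \<alpha>"
proof -
  assume ct: "c \<le> t"
  have "norm (integral {..c} (G t)) \<le> integral {..c} (\<lambda>s. M * exp (-\<alpha> * t) * exp (\<alpha> * s))"
    by (rule integral_norm_bound_integral) (use G_int[OF ct] B_has G_bd ct in auto)
  also have "\<dots> = M * exp (-\<alpha> * t) * (exp (\<alpha> * c) / \<alpha>)"
    using B_has by (rule integral_unique)
  also have "\<dots> = M * exp (-\<alpha> * (t - c)) / \<alpha>"
    by (simp add: algebra_simps flip: exp_add)
  finally show ?thesis by simp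
qed

lemma F_bd: "\<bar>F t\<bar> \<le> M / \<alpha>"
proof -
  have "norm (F t) \<le> integral {..t} (\<lambda>s. M * exp (-\<alpha> * t) * exp (\<alpha> * s))"
    unfolding F_def
    by (rule integral_norm_bound_integral) (use G_int[of t t] B_has G_bd in auto)
  also have "\<dots> = M * exp (-\<alpha> * t) * (exp (\<alpha> * t) / \<alpha>)"
    using B_has by (rule integral_unique)
  also have "\<dots> = M / \<alpha>"
    by (simp flip: exp_add)
  finally show ?thesis by simp
qed


lemma key:
  assumes L: "L > 0" and d: "d \<ge> 0"
    and hyp: "\<And>x. x \<in> {t-L..t} \<Longrightarrow> \<bar>a (x+\<omega>) - a x\<bar> \<le> d \<and> \<bar>f (x+\<omega>) - f x\<bar> \<le> d"
  shows "\<bar>F (t+\<omega>) - F t\<bar> \<le> L * (1 + M * L) * d + 2 * M * exp (-\<alpha> * L) / \<alpha>"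
proof -
  have s1: "F (t+\<omega>) = integral {..t+\<omega>-L} (G (t+\<omega>)) + integral {t+\<omega>-L..t+\<omega>} (G (t+\<omega>))"
    using F_split[of "t+\<omega>-L" "t+\<omega>"] L by simp
  have s2: "F t = integral {..t-L} (G t) + integral {t-L..t} (G t)"
    using F_split[of "t-L" t] L by simp
  have r1: "\<bar>integral {..t+\<omega>-L} (G (t+\<omega>))\<bar> \<le> M * exp (-\<alpha> * L) / \<alpha>"
    using tail_bd[of "t+\<omega>-L" "t+\<omega>"] L by simp
  have r2: "\<bar>integral {..t-L} (G t)\<bar> \<le> M * exp (-\<alpha> * L) / \<alpha>"
    using tail_bd[of "t-L" "t"] L by simp
  have sh: "integral {t+\<omega>-L..t+\<omega>} (G (t+\<omega>)) = integral {t-L..t} (\<lambda>s. G (t+\<omega>) (s+\<omega>))"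
    using integral_shift_real_ivl[of "t+\<omega>-L" \<omega> "t+\<omega>" "G (t+\<omega>)"] by simp
  have i1: "(\<lambda>s. G (t+\<omega>) (s+\<omega>)) integrable_on {t-L..t}"
    using integrable_shift_real_ivl[OF G_int2[of "t+\<omega>-L" "t+\<omega>"], of \<omega>] L by simp
  have i2: "G t integrable_on {t-L..t}" using G_int2[of "t-L" t] L by simp
  have pw: "\<bar>G (t+\<omega>) (s+\<omega>) - G t s\<bar> \<le> (1 + M * L) * d" if s: "s \<in> {t-L..t}" for s
  proof -
    define A1 where "A1 = A (s+\<omega>) (t+\<omega>)"
    define A0 where "A0 = A s t"
    have A1n: "A1 \<ge> 0" "A0 \<ge> 0" using A_nonneg s by (auto simp: A1_def A0_def)
    have A1e: "A1 = integral {s..t} (\<lambda>r. a (r+\<omega>))"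
      using integral_shift_real_ivl[of "s+\<omega>" \<omega> "t+\<omega>" a] by (simp add: A1_def A_def)
    have ia: "(\<lambda>r. a (r+\<omega>)) integrable_on {s..t}"
      using integrable_shift_real_ivl[OF a_int[of "s+\<omega>" "t+\<omega>"], of \<omega>] by simp
    have "A1 - A0 = integral {s..t} (\<lambda>r. a (r+\<omega>) - a r)"
      using A1e ia a_int by (simp add: A0_def A_def integral_diff)
    also have "norm \<dots> \<le> integral {s..t} (\<lambda>_. d)"
      by (rule integral_norm_bound_integral)
         (use ia a_int hyp s in \<open>auto intro!: integrable_diff\<close>)
    also have "\<dots> = (t - s) * d" using s by simp
    also have "\<dots> \<le> L * d" using s d by (intro mult_right_mono) auto
    finally have dA: "\<bar>A1 - A0\<bar> \<le> L * d" by simp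
    have "G (t+\<omega>) (s+\<omega>) - G t s
        = exp (-A1) * (f (s+\<omega>) - f s) + (exp (-A1) - exp (-A0)) * f s"
      by (simp add: G_def A1_def A0_def algebra_simps)
    also have "\<bar>\<dots>\<bar> \<le> exp (-A1) * \<bar>f (s+\<omega>) - f s\<bar> + \<bar>exp (-A1) - exp (-A0)\<bar> * \<bar>f s\<bar>"
      by (simp add: abs_mult abs_triangle_ineq[THEN order_trans])
    also have "\<dots> \<le> 1 * d + (L * d) * M"
    proof (intro add_mono mult_mono)
      show "exp (-A1) \<le> 1" using A1n by simp
      show "\<bar>f (s+\<omega>) - f s\<bar> \<le> d" using hyp s by auto
      show "\<bar>exp (-A1) - exp (-A0)\<bar> \<le> L * d"
        using exp_diff_le[OF A1n] dA by linarith
      show "\<bar>f s\<bar> \<le> M" by (rule f_bd)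
    qed (use d L in auto)
    finally show ?thesis by (simp add: algebra_simps)
  qed
  have "\<bar>integral {t-L..t} (\<lambda>s. G (t+\<omega>) (s+\<omega>)) - integral {t-L..t} (G t)\<bar>
        = norm (integral {t-L..t} (\<lambda>s. G (t+\<omega>) (s+\<omega>) - G t s))"
    using i1 i2 by (simp add: integral_diff)
  also have "\<dots> \<le> integral {t-L..t} (\<lambda>_. (1 + M * L) * d)"
    by (rule integral_norm_bound_integral) (use i1 i2 pw in \<open>auto intro!: integrable_diff\<close>)
  also have "\<dots> = L * (1 + M * L) * d" using L by simp
  finally have mid: "\<bar>integral {t-L..t} (\<lambda>s. G (t+\<omega>) (s+\<omega>)) - integral {t-L..t} (G t)\<bar>
        \<le> L * (1 + M * L) * d" .
  show ?thesis using s1 s2 r1 r2 sh mid by linarith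
qed


lemma choose:
  assumes e: "\<epsilon> > 0"
  shows "\<exists>L>0. \<exists>d>0. \<forall>t \<omega>. (\<forall>x\<in>{t-L..t}. \<bar>a (x+\<omega>) - a x\<bar> \<le> d \<and> \<bar>f (x+\<omega>) - f x\<bar> \<le> d)
           \<longrightarrow> \<bar>F (t+\<omega>) - F t\<bar> < \<epsilon>"
proof -
  define L where "L = 4 * (M + 1) / (\<alpha> * \<alpha> * \<epsilon>)"
  have Lpos: "L > 0" using M_nonneg alpha e by (simp add: L_def)
  have "exp (\<alpha> * L) \<ge> 1 + \<alpha> * L" by (rule exp_ge_add_one_self)
  then have eL: "exp (\<alpha> * L) > \<alpha> * L" by linarith
  have aL: "\<alpha> * L > 0" using alpha Lpos by simp
  have "exp (-\<alpha> * L) = 1 / exp (\<alpha> * L)" by (simp add: exp_minus field_simps)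
  also have "\<dots> \<le> 1 / (\<alpha> * L)" using eL aL by (intro divide_left_mono) auto
  finally have ex: "exp (-\<alpha> * L) \<le> 1 / (\<alpha> * L)" .
  have "2 * M * exp (-\<alpha> * L) / \<alpha> \<le> 2 * M * (1 / (\<alpha> * L)) / \<alpha>"
    using ex M_nonneg alpha by (intro divide_right_mono mult_left_mono) auto
  also have "\<dots> = 2 * M / (\<alpha> * \<alpha> * L)"
    by (simp add: field_simps)
  also have "\<alpha> * \<alpha> * L = 4 * (M + 1) / \<epsilon>"
    using alpha e by (simp add: L_def field_simps)
  also have "2 * M / (4 * (M + 1) / \<epsilon>) = 2 * M * \<epsilon> / (4 * (M + 1))"
    by simp
  also have "\<dots> < \<epsilon> / 2"
    using e M_nonneg by (simp add: field_simps)
  finally have tail: "2 * M * exp (-\<alpha> * L) / \<alpha> < \<epsilon> / 2" .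
  define d where "d = \<epsilon> / (4 * (L * (1 + M * L)))"
  have pos: "L * (1 + M * L) > 0" using Lpos M_nonneg by (simp add: add_pos_nonneg)
  have dpos: "d > 0" using pos e by (simp add: d_def)
  have md: "L * (1 + M * L) * d = \<epsilon> / 4" using pos unfolding d_def by (simp add: field_simps)
  show ?thesis
  proof (intro exI conjI allI impI)
    fix t \<omega>
    assume h: "\<forall>x\<in>{t-L..t}. \<bar>a (x+\<omega>) - a x\<bar> \<le> d \<and> \<bar>f (x+\<omega>) - f x\<bar> \<le> d"
    have "\<bar>F (t+\<omega>) - F t\<bar> \<le> L * (1 + M * L) * d + 2 * M * exp (-\<alpha> * L) / \<alpha>"
      by (rule key) (use Lpos dpos h in auto)
    then show "\<bar>F (t+\<omega>) - F t\<bar> < \<epsilon>" using md tail e by linarith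
  qed (use Lpos dpos in auto)
qed

lemma F_cont: "continuous_on UNIV F"
  unfolding continuous_on_iff
proof (intro ballI allI impI)
  fix t0 \<epsilon> :: real assume e: "\<epsilon> > 0"
  obtain L d where L: "L > 0" and d: "d > 0" and H:
    "\<And>t \<omega>. (\<forall>x\<in>{t-L..t}. \<bar>a (x+\<omega>) - a x\<bar> \<le> d \<and> \<bar>f (x+\<omega>) - f x\<bar> \<le> d)
           \<Longrightarrow> \<bar>F (t+\<omega>) - F t\<bar> < \<epsilon>"
    using choose[OF e] by blast
  define K where "K = {t0-L-1..t0+1}"
  have uca: "uniformly_continuous_on K a"
    by (rule compact_uniformly_continuous) (auto simp: K_def intro: continuous_on_subset[OF a_cont])
  have ucf: "uniformly_continuous_on K f"
    by (rule compact_uniformly_continuous) (auto simp: K_def intro: continuous_on_subset[OF f_cont])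
  obtain da where da: "da > 0" "\<And>x x'. x \<in> K \<Longrightarrow> x' \<in> K \<Longrightarrow> dist x' x < da \<Longrightarrow> dist (a x') (a x) < d"
    using uca d unfolding uniformly_continuous_on_def by metis
  obtain df where df: "df > 0" "\<And>x x'. x \<in> K \<Longrightarrow> x' \<in> K \<Longrightarrow> dist x' x < df \<Longrightarrow> dist (f x') (f x) < d"
    using ucf d unfolding uniformly_continuous_on_def by metis
  show "\<exists>\<delta>>0. \<forall>t'\<in>UNIV. dist t' t0 < \<delta> \<longrightarrow> dist (F t') (F t0) < \<epsilon>"
  proof (intro exI conjI ballI impI)
    show "min 1 (min da df) > 0" using da df by simp
    fix t' :: real assume "dist t' t0 < min 1 (min da df)"
    then have w: "\<bar>t' - t0\<bar> < 1" "\<bar>t' - t0\<bar> < da" "\<bar>t' - t0\<bar> < df" by (auto simp: dist_real_def)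
    have "\<bar>F (t0 + (t' - t0)) - F t0\<bar> < \<epsilon>"
    proof (rule H, intro ballI conjI)
      fix x assume x: "x \<in> {t0-L..t0}"
      have xK: "x \<in> K" "x + (t' - t0) \<in> K" using x w by (auto simp: K_def)
      have "dist (x + (t' - t0)) x < da" "dist (x + (t' - t0)) x < df" using w by (auto simp: dist_real_def)
      then show "\<bar>a (x + (t' - t0)) - a x\<bar> \<le> d" "\<bar>f (x + (t' - t0)) - f x\<bar> \<le> d"
        using da(2)[OF xK] df(2)[OF xK] by (auto simp: dist_real_def)
    qed
    then show "dist (F t') (F t0) < \<epsilon>" by (simp add: dist_real_def)
  qed
qed

lemma F_osc:
  assumes oa: "((\<lambda>t. \<bar>a (t + \<omega>) - a t\<bar>) \<longlongrightarrow> 0) at_infinity"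
    and of: "((\<lambda>t. \<bar>f (t + \<omega>) - f t\<bar>) \<longlongrightarrow> 0) at_infinity"
  shows "((\<lambda>t. \<bar>F (t + \<omega>) - F t\<bar>) \<longlongrightarrow> 0) at_infinity"
  unfolding tendsto_iff
proof (intro allI impI)
  fix \<epsilon> :: real assume e: "\<epsilon> > 0"
  obtain L d where L: "L > 0" and d: "d > 0" and H:
    "\<And>t \<omega>. (\<forall>x\<in>{t-L..t}. \<bar>a (x+\<omega>) - a x\<bar> \<le> d \<and> \<bar>f (x+\<omega>) - f x\<bar> \<le> d)
           \<Longrightarrow> \<bar>F (t+\<omega>) - F t\<bar> < \<epsilon>"
    using choose[OF e] by blast
  have "eventually (\<lambda>t. dist \<bar>a (t + \<omega>) - a t\<bar> 0 < d) at_infinity"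
    using oa d unfolding tendsto_iff by blast
  moreover have "eventually (\<lambda>t. dist \<bar>f (t + \<omega>) - f t\<bar> 0 < d) at_infinity"
    using of d unfolding tendsto_iff by blast
  ultimately have "eventually (\<lambda>t. \<bar>a (t + \<omega>) - a t\<bar> < d \<and> \<bar>f (t + \<omega>) - f t\<bar> < d) at_infinity"
    by eventually_elim (auto simp: dist_real_def)
  then obtain b where b: "\<And>x::real. b \<le> norm x \<Longrightarrow> \<bar>a (x + \<omega>) - a x\<bar> < d \<and> \<bar>f (x + \<omega>) - f x\<bar> < d"
    unfolding eventually_at_infinity by blast
  show "eventually (\<lambda>t. dist \<bar>F (t + \<omega>) - F t\<bar> 0 < \<epsilon>) at_infinity"
    unfolding eventually_at_infinity
  proof (intro exI allI impI)
    fix t :: real assume t: "b + L \<le> norm t"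
    have "\<bar>F (t + \<omega>) - F t\<bar> < \<epsilon>"
    proof (rule H, intro ballI)
      fix x assume x: "x \<in> {t-L..t}"
      have "b \<le> norm x" using x t by auto
      then show "\<bar>a (x+\<omega>) - a x\<bar> \<le> d \<and> \<bar>f (x+\<omega>) - f x\<bar> \<le> d" using b by force
    qed
    then show "dist \<bar>F (t + \<omega>) - F t\<bar> 0 < \<epsilon>" by simp
  qed
qed

end

theorem lemma4p2:
  fixes \<alpha> :: real and a f :: "real \<Rightarrow> real"
  assumes "\<alpha> > 0"
    and "\<And>t. a t \<ge> \<alpha>"
    and "slowly_oscillating a"
    and "slowly_oscillating f"
  shows "slowly_oscillating
           (\<lambda>t. integral {..t} (\<lambda>s. exp (- integral {s..t} a) * f s))"
proof -
  from assms(4) obtain M where M: "\<And>x. norm (f x) \<le> M"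
    unfolding slowly_oscillating_def bounded_iff by blast
  interpret so_setting \<alpha> M a f
    using assms M unfolding slowly_oscillating_def by unfold_locales auto
  have eq: "(\<lambda>t. integral {..t} (\<lambda>s. exp (- integral {s..t} a) * f s)) = F"
    by (simp add: fun_eq_iff F_def G_def[abs_def] A_def)
  show ?thesis
    unfolding eq slowly_oscillating_def
  proof (intro conjI allI)
    show "bounded (range F)"
      unfolding bounded_iff using F_bd by auto
    show "continuous_on UNIV F" by (rule F_cont)
    fix \<omega> :: real
    show "((\<lambda>t. \<bar>F (t + \<omega>) - F t\<bar>) \<longlongrightarrow> 0) at_infinity"
      by (rule F_osc) (use assms(3,4) in \<open>auto simp: slowly_oscillating_def\<close>)
  qed
qed

end
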